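(* Let $m\ge1$ and $0<\alpha<\pi$, and set $h=E_m(2\alpha)$. Then $0<h<2$ and $\delta_m(h)=2\pi-2\alpha$.
   Context: $\Gamma$ is the unit circle of $\mathbb{C}$ with arc-length measure $|\cdot|$; $\mathfrak{P}_m(\Gamma)$ is the set of monic algebraic polynomials of degree $m$ all of whose zeros lie on $\Gamma$. For a compact set $Q\subset\Gamma$, $E_m(Q)=\inf\{\max_{z\in Q}|P(z)|:P\in\mathfrak{P}_m(\Gamma)\}$, and $E_m(2\alpha)=\inf\{E_m(Q):Q\subset\Gamma\text{ compact},|Q|=2\alpha\}$. $\mathbb{T}=[0,2\pi)$ with endpoints identified, with Lebesgue measure $\mathrm{mes}$, and for $0\le h\le2$, $\delta_m(h)=\inf\{\mathrm{mes}\{t\in\mathbb{T}:|P(e^{it})|\ge h\}:P\in\mathfrak{P}_m(\Gamma)\}$. *)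

theory Defs
  imports "HOL-Analysis.Analysis" "HOL-Computational_Algebra.Polynomial"
begin

definition monic_circle_polys :: "nat \<Rightarrow> complex poly set" where
  "monic_circle_polys m = {P. degree P = m \<and> lead_coeff P = 1 \<and>
      (\<forall>z. poly P z = 0 \<longrightarrow> cmod z = 1)}"

definition arc_length :: "complex set \<Rightarrow> real" where
  "arc_length Q = measure lebesgue {t \<in> {0..<2*pi}. cis t \<in> Q}"

definition E_set :: "nat \<Rightarrow> complex set \<Rightarrow> real" where
  "E_set m Q = (INF P \<in> monic_circle_polys m. (SUP z \<in> Q. cmod (poly P z)))"

definition E_len :: "nat \<Rightarrow> real \<Rightarrow> real" where
  "E_len m a = (INF Q \<in> {Q. Q \<subseteq> sphere 0 1 \<and> compact Q \<and> arc_length Q = a}. E_set m Q)"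

definition delta :: "nat \<Rightarrow> real \<Rightarrow> real" where
  "delta m h = (INF P \<in> monic_circle_polys m.
      measure lebesgue {t \<in> {0..<2*pi}. cmod (poly P (cis t)) \<ge> h})"

end

theory Submission
  imports Defs "HOL-Computational_Algebra.Fundamental_Theorem_Algebra"
begin

lemma cis_inj: assumes "t \<in> {0..<2*pi}" "u \<in> {0..<2*pi}" "cis t = cis u" shows "t = u"
proof -
  have "sin t = sin u \<and> cos t = cos u" using assms(3) by (metis cis.sel)
  then obtain n::int where n: "t = u + 2*pi*n" using sin_cos_eq_iff by metis
  have e: "2*pi*n = t - u" using n by simp
  have a: "2*pi*n < 2*pi*1" "2*pi*(-1) < 2*pi*n" unfolding e using assms(1,2) by auto
  have "real_of_int n < 1" using a(1) by (simp add: mult_less_cancel_left_pos)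
  moreover have "-1 < real_of_int n" using a(2) mult_less_cancel_left_pos[of "2*pi" "-1" "real_of_int n"] pi_gt_zero by linarith
  ultimately have "n = 0" by linarith
  then show ?thesis using n by simp
qed
lemma Ico_lmeas: "S \<in> sets borel \<Longrightarrow> {0..<2*pi} \<inter> S \<in> lmeasurable"
  apply (rule bounded_set_imp_lmeasurable)
   apply (rule bounded_Int, rule disjI1, rule bounded_subset[of "{0..2*pi}"], simp, force)
  by (simp add: sets.Int)

lemma cont_pc: "continuous_on UNIV (\<lambda>t. cmod (poly P (cis t)))"
  by (intro continuous_intros)

lemma lev_le: "{t\<in>{0..<2*pi}. cmod (poly P (cis t)) \<le> c} \<in> lmeasurable"
proof -
  have "{t\<in>{0..<2*pi}. cmod (poly P (cis t)) \<le> c} = {0..<2*pi} \<inter> {t. cmod (poly P (cis t)) \<le> c}" by auto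
  also have "\<dots> \<in> lmeasurable"
    by (intro Ico_lmeas borel_closed closed_Collect_le cont_pc continuous_on_const)
  finally show ?thesis .
qed
lemma lev_ge: "{t\<in>{0..<2*pi}. cmod (poly P (cis t)) \<ge> c} \<in> lmeasurable"
proof -
  have "{t\<in>{0..<2*pi}. cmod (poly P (cis t)) \<ge> c} = {0..<2*pi} \<inter> {t. c \<le> cmod (poly P (cis t))}" by auto
  also have "\<dots> \<in> lmeasurable"
    by (intro Ico_lmeas borel_closed closed_Collect_le cont_pc continuous_on_const)
  finally show ?thesis .
qed
lemma lev_lt: "{t\<in>{0..<2*pi}. cmod (poly P (cis t)) < c} \<in> lmeasurable"
proof -
  have "{t\<in>{0..<2*pi}. cmod (poly P (cis t)) < c} = {0..<2*pi} \<inter> {t. cmod (poly P (cis t)) < c}" by auto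
  also have "\<dots> \<in> lmeasurable"
    by (intro Ico_lmeas borel_open open_Collect_less cont_pc continuous_on_const)
  finally show ?thesis .
qed
lemma lev_eq: "{t\<in>{0..<2*pi}. cmod (poly P (cis t)) = c} \<in> lmeasurable"
proof -
  have "{t\<in>{0..<2*pi}. cmod (poly P (cis t)) = c} = {0..<2*pi} \<inter> {t. cmod (poly P (cis t)) = c}" by auto
  also have "\<dots> \<in> lmeasurable"
    by (intro Ico_lmeas borel_closed closed_Collect_eq cont_pc continuous_on_const)
  finally show ?thesis .
qed
lemma arc_pre_lmeas: assumes "closed Q" shows "{t\<in>{0..<2*pi}. cis t \<in> Q} \<in> lmeasurable"
proof -
  have "{t\<in>{0..<2*pi}. cis t \<in> Q} = {0..<2*pi} \<inter> (cis -` Q)" by auto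
  also have "\<dots> \<in> lmeasurable"
    by (intro Ico_lmeas borel_closed closed_vimage assms continuous_on_cis continuous_on_id)
  finally show ?thesis .
qed
lemma arc_img: assumes "K \<subseteq> {0..<2*pi}" shows "{t\<in>{0..<2*pi}. cis t \<in> cis ` K} = K"
  using assms cis_inj by blast
lemma Ico_fmeas: "{0..<2*pi} \<in> lmeasurable" using Ico_lmeas[of UNIV] by simp
lemma g_lip:
  assumes "compact T" "s \<le> s'"
  shows "measure lebesgue (T \<inter> {0..s}) \<le> measure lebesgue (T \<inter> {0..s'})"
    "measure lebesgue (T \<inter> {0..s'}) \<le> measure lebesgue (T \<inter> {0..s}) + (s' - s)"
proof -
  have c1: "compact (T \<inter> {0..s})" "compact (T \<inter> {0..s'})" using assms(1) by (auto intro: compact_Int_closed)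
  then have m: "T \<inter> {0..s} \<in> lmeasurable" "T \<inter> {0..s'} \<in> lmeasurable" by (auto intro: lmeasurable_compact)
  show "measure lebesgue (T \<inter> {0..s}) \<le> measure lebesgue (T \<inter> {0..s'})"
    using assms(2) m by (intro measure_mono_fmeasurable) auto
  have "measure lebesgue (T \<inter> {0..s'}) \<le> measure lebesgue ((T \<inter> {0..s}) \<union> {s..s'})"
    using assms(2) m by (intro measure_mono_fmeasurable) (auto intro!: fmeasurable.Un)
  also have "\<dots> \<le> measure lebesgue (T \<inter> {0..s}) + measure lebesgue {s..s'}"
    using m by (intro measure_Un_le) auto
  also have "measure lebesgue {s..s'} = s' - s" using assms(2) by simp
  finally show "measure lebesgue (T \<inter> {0..s'}) \<le> measure lebesgue (T \<inter> {0..s}) + (s' - s)" .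
qed

lemma exact_sub:
  assumes "compact T" "T \<subseteq> {0..<2*pi}" "a \<ge> 0" "measure lebesgue T \<ge> a"
  shows "\<exists>K. compact K \<and> K \<subseteq> T \<and> measure lebesgue K = a"
proof -
  define g where "g s = measure lebesgue (T \<inter> {0..s})" for s
  have cont: "continuous_on {0..2*pi} g"
    unfolding continuous_on_iff
  proof (intro ballI allI impI)
    fix x e :: real assume "x \<in> {0..2*pi}" "0 < e"
    show "\<exists>d>0. \<forall>x'\<in>{0..2 * pi}. dist x' x < d \<longrightarrow> dist (g x') (g x) < e"
    proof (intro exI[of _ e] conjI ballI impI)
      fix x' assume "dist x' x < e"
      then show "dist (g x') (g x) < e"
        using g_lip[OF assms(1), of x x'] g_lip[OF assms(1), of x' x]
        unfolding g_def dist_real_def by (cases "x \<le> x'") auto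
    qed (use \<open>0 < e\<close> in auto)
  qed
  have cc: "compact (T \<inter> {0..0})" using assms(1) by (auto intro: compact_Int_closed)
  have "g 0 \<le> measure lebesgue {0..0::real}" unfolding g_def
    by (rule measure_mono_fmeasurable) (use lmeasurable_compact[OF cc] lmeasurable_compact[of "{0::real}"] in auto)
  then have g0: "g 0 \<le> a" using assms(3) by simp
  have "T \<inter> {0..2*pi} = T" using assms(2) by auto
  then have g2: "a \<le> g (2*pi)" using assms(4) by (simp add: g_def)
  obtain s where s: "0 \<le> s" "s \<le> 2*pi" "g s = a"
    using IVT'[of g 0 a "2*pi", OF g0 g2 _ cont] by auto
  show ?thesis
    by (intro exI[of _ "T \<inter> {0..s}"]) (use s assms(1) in \<open>auto simp: g_def intro: compact_Int_closed\<close>)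
qed
lemma prod_mem:
  assumes "\<forall>j<k. cmod (\<rho> j) = 1"
  shows "(\<Prod>j<k. [:-\<rho> j, 1:]) \<in> monic_circle_polys k"
  using assms
proof (induction k)
  case 0 then show ?case by (simp add: monic_circle_polys_def)
next
  case (Suc k)
  then have ih: "(\<Prod>j<k. [:-\<rho> j, 1:]) \<in> monic_circle_polys k" by simp
  let ?Q = "\<Prod>j<k. [:-\<rho> j, 1:]"
  have nz: "?Q \<noteq> 0" using ih by (auto simp: monic_circle_polys_def)
  have deg: "degree (?Q * [:-\<rho> k, 1:]) = Suc k"
    using ih nz by (subst degree_mult_eq) (auto simp: monic_circle_polys_def)
  have lQ: "lead_coeff ?Q = 1" using ih unfolding monic_circle_polys_def by blast
  have lc: "lead_coeff (?Q * [:-\<rho> k, 1:]) = 1"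
    by (subst lead_coeff_mult) (simp only: lQ, simp)
  show ?case
    using deg lc ih Suc.prems by (auto simp: monic_circle_polys_def)
qed

lemma split_poly:
  "P \<in> monic_circle_polys k \<Longrightarrow> \<exists>\<rho>. (\<forall>j<k. cmod (\<rho> j) = 1) \<and> P = (\<Prod>j<k. [:-\<rho> j, 1:])"
proof (induction k arbitrary: P)
  case 0
  then have "degree P = 0" "lead_coeff P = 1" by (auto simp: monic_circle_polys_def)
  then have "P = 1" by (metis leading_coeff_0_iff one_poly_eq_simps(1) degree_0_id)
  then show ?case by simp
next
  case (Suc k)
  then have d: "degree P = Suc k" and l: "lead_coeff P = 1" and r: "\<forall>z. poly P z = 0 \<longrightarrow> cmod z = 1"
    by (auto simp: monic_circle_polys_def)
  have "\<not> constant (poly P)" using d by (simp add: constant_degree)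
  then obtain z where z: "poly P z = 0" using fundamental_theorem_of_algebra by blast
  then obtain Q where Q: "P = [:-z, 1:] * Q" using poly_eq_0_iff_dvd by (metis dvdE)
  have Qnz: "Q \<noteq> 0" using Q d by auto
  have "degree ([:-z,1:]*Q) = degree [:-z,1:] + degree Q" by (rule degree_mult_eq) (use Qnz in auto)
  then have dQ: "degree Q = k" using Q d by simp
  have "lead_coeff ([:-z,1:]*Q) = lead_coeff [:-z,1:] * lead_coeff Q" by (rule lead_coeff_mult)
  then have lQ: "lead_coeff Q = 1" using Q l by simp
  have rQ: "\<forall>w. poly Q w = 0 \<longrightarrow> cmod w = 1" using r Q by auto
  have "Q \<in> monic_circle_polys k" using dQ lQ rQ by (simp add: monic_circle_polys_def)
  then obtain \<rho> where \<rho>: "\<forall>j<k. cmod (\<rho> j) = 1" "Q = (\<Prod>j<k. [:-\<rho> j, 1:])" using Suc.IH by blast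
  define \<sigma> where "\<sigma> = \<rho>(k := z)"
  have "(\<Prod>j<Suc k. [:-\<sigma> j, 1:]) = (\<Prod>j<k. [:-\<sigma> j, 1:]) * [:-z,1:]"
    by (simp add: \<sigma>_def)
  also have "(\<Prod>j<k. [:-\<sigma> j, 1:]) = Q" using \<rho>(2) by (simp add: \<sigma>_def)
  finally have "P = (\<Prod>j<Suc k. [:-\<sigma> j, 1:])" using Q by (simp add: mult.commute)
  moreover have "\<forall>j<Suc k. cmod (\<sigma> j) = 1" using \<rho>(1) r z by (simp add: \<sigma>_def less_Suc_eq)
  ultimately show ?case by blast
qed

lemma poly0_nz: "P \<in> monic_circle_polys m \<Longrightarrow> poly P 0 \<noteq> 0"
  by (auto simp: monic_circle_polys_def)

lemma P2_mem: assumes "m \<ge> 1" shows "monom 1 m + 1 \<in> monic_circle_polys m"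
proof -
  have d: "degree (monom (1::complex) m + 1) = m"
    using assms by (subst degree_add_eq_left) (auto simp: degree_monom_eq)
  have "lead_coeff (monom (1::complex) m + 1) = 1" unfolding d using assms by (simp add: coeff_monom)
  moreover have "cmod z = 1" if "poly (monom 1 m + 1) z = 0" for z :: complex
  proof -
    have "z ^ m = -1" using that by (simp add: poly_monom eq_neg_iff_add_eq_0)
    then have "cmod z ^ m = 1" by (metis norm_minus_cancel norm_one norm_power)
    then show ?thesis using assms power_eq_iff_eq_base[of m "cmod z" 1] by simp
  qed
  ultimately show ?thesis using d by (auto simp: monic_circle_polys_def)
qed

lemma lev_finite:
  assumes "P \<in> monic_circle_polys m" "m \<ge> 1"
  shows "finite {t\<in>{0..<2*pi}. cmod (poly P (cis t)) = c}"
proof -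
  define R where "R = reflect_poly (map_poly cnj P)"
  define S where "S = P * R - [:complex_of_real (c^2):] * monom 1 m"
  have dm: "degree (map_poly cnj P) = m" using assms(1) by (simp add: degree_map_poly monic_circle_polys_def)
  have "poly S 0 = poly P 0 * lead_coeff (map_poly cnj P)"
    using assms(2) by (simp add: S_def R_def poly_monom)
  also have "lead_coeff (map_poly cnj P) = 1"
  proof -
    have "degree P = m" "lead_coeff P = 1" using assms(1) by (auto simp: monic_circle_polys_def)
    then show ?thesis using dm by (simp add: coeff_map_poly)
  qed
  finally have "poly S 0 \<noteq> 0" using poly0_nz[OF assms(1)] by simp
  then have "S \<noteq> 0" by auto
  then have fin: "finite {z. poly S z = 0}" by (rule poly_roots_finite)
  have key: "poly S (cis t) = 0" if "cmod (poly P (cis t)) = c" for t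
  proof -
    have inv: "inverse (cis t) = cnj (cis t)" by (simp add: cis_cnj cis_inverse)
    have "poly R (cis t) = cis t ^ m * cnj (poly P (cis t))"
      unfolding R_def poly_reflect_poly_nz[OF cis_neq_zero] dm inv poly_map_poly_cnj complex_cnj_cnj ..
    then have "poly P (cis t) * poly R (cis t) = cis t ^ m * (poly P (cis t) * cnj (poly P (cis t)))" by simp
    also have "poly P (cis t) * cnj (poly P (cis t)) = complex_of_real (c^2)"
      using complex_norm_square[of "poly P (cis t)"] that by simp
    finally show ?thesis by (simp add: S_def poly_monom)
  qed
  have "cis ` {t\<in>{0..<2*pi}. cmod (poly P (cis t)) = c} \<subseteq> {z. poly S z = 0}" using key by auto
  then have "finite (cis ` {t\<in>{0..<2*pi}. cmod (poly P (cis t)) = c})" using fin finite_subset by blast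
  moreover have "inj_on cis {t\<in>{0..<2*pi}. cmod (poly P (cis t)) = c}"
    using cis_inj by (auto simp: inj_on_def)
  ultimately show ?thesis using finite_imageD by blast
qed

lemma lev_null:
  assumes "P \<in> monic_circle_polys m" "m \<ge> 1"
  shows "measure lebesgue {t\<in>{0..<2*pi}. cmod (poly P (cis t)) = c} = 0"
  using lev_finite[OF assms] by (intro negligible_imp_measure0 negligible_finite)
lemma diag:
  fixes k :: nat and \<rho> :: "nat \<Rightarrow> nat \<Rightarrow> complex"
  assumes "\<forall>n j. \<rho> n j \<in> sphere (0::complex) 1"
  shows "\<exists>r l. strict_mono r \<and> (\<forall>j<k. l j \<in> sphere 0 1 \<and> (\<lambda>n. \<rho> (r n) j) \<longlonglongrightarrow> l j)"
proof (induction k)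
  case 0
  have "strict_mono (id::nat\<Rightarrow>nat)" by (simp add: strict_mono_def)
  then show ?case by (intro exI[of _ id] exI[of _ "\<lambda>_. 0"]) (simp add: id_def)
next
  case (Suc k)
  then obtain r l where rl: "strict_mono r" "\<forall>j<k. l j \<in> sphere 0 1 \<and> (\<lambda>n. \<rho> (r n) j) \<longlonglongrightarrow> l j" by blast
  have "seq_compact (sphere (0::complex) 1)" by (intro compact_imp_seq_compact compact_sphere)
  then obtain l' r' where l': "l' \<in> sphere 0 1" "strict_mono (r' :: nat \<Rightarrow> nat)" "((\<lambda>n. \<rho> (r n) k) \<circ> r') \<longlonglongrightarrow> l'"
  proof (rule seq_compactE)
    show "\<forall>n. ((\<lambda>n. \<rho> (r n) k)) n \<in> sphere 0 1" using assms by blast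
  qed
  have sm: "strict_mono (r \<circ> r')" using rl(1) l'(2) by (rule strict_mono_o)
  have "\<forall>j<Suc k. (l(k := l')) j \<in> sphere 0 1 \<and> (\<lambda>n. \<rho> ((r \<circ> r') n) j) \<longlonglongrightarrow> (l(k := l')) j"
  proof (intro allI impI)
    fix j assume "j < Suc k"
    then consider "j < k" | "j = k" by linarith
    then show "(l(k := l')) j \<in> sphere 0 1 \<and> (\<lambda>n. \<rho> ((r \<circ> r') n) j) \<longlonglongrightarrow> (l(k := l')) j"
    proof cases
      case 1
      then have "(\<lambda>n. \<rho> (r n) j) \<longlonglongrightarrow> l j" "l j \<in> sphere 0 1" using rl(2) by auto
      then have "((\<lambda>n. \<rho> (r n) j) \<circ> r') \<longlonglongrightarrow> l j" using LIMSEQ_subseq_LIMSEQ l'(2) by blast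
      then show ?thesis using 1 \<open>l j \<in> sphere 0 1\<close> by (simp add: o_def)
    next
      case 2
      then show ?thesis using l' by (simp add: o_def)
    qed
  qed
  then show ?case using sm by blast
qed

lemma cpt:
  fixes P :: "nat \<Rightarrow> complex poly"
  assumes "\<forall>n. P n \<in> monic_circle_polys m"
  shows "\<exists>r P0. strict_mono r \<and> P0 \<in> monic_circle_polys m \<and> (\<forall>z. (\<lambda>n. poly (P (r n)) z) \<longlonglongrightarrow> poly P0 z)"
proof -
  have ex: "\<forall>n. \<exists>\<rho>. (\<forall>j<m. cmod (\<rho> j) = 1) \<and> P n = (\<Prod>j<m. [:-\<rho> j, 1:])"
  proof
    fix n show "\<exists>\<rho>. (\<forall>j<m. cmod (\<rho> j) = 1) \<and> P n = (\<Prod>j<m. [:-\<rho> j, 1:])"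
      using assms by (intro split_poly) simp
  qed
  obtain \<rho> where \<rho>: "\<And>n. (\<forall>j<m. cmod (\<rho> n j) = 1) \<and> P n = (\<Prod>j<m. [:-\<rho> n j, 1:])"
    using choice[OF ex] by auto
  define \<sigma> where "\<sigma> n j = (if j < m then \<rho> n j else 1)" for n j
  have sph: "\<forall>n j. \<sigma> n j \<in> sphere (0::complex) 1"
  proof (intro allI)
    fix n j show "\<sigma> n j \<in> sphere (0::complex) 1" using \<rho>[of n] by (simp add: \<sigma>_def)
  qed
  obtain r l where rl: "strict_mono r" "\<forall>j<m. l j \<in> sphere 0 1 \<and> (\<lambda>n. \<sigma> (r n) j) \<longlonglongrightarrow> l j"
    using diag[OF sph, of m] by blast
  have mem: "(\<Prod>j<m. [:-l j, 1:]) \<in> monic_circle_polys m" using rl(2) by (intro prod_mem) auto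
  have lim: "\<forall>z. (\<lambda>n. poly (P (r n)) z) \<longlonglongrightarrow> poly (\<Prod>j<m. [:-l j, 1:]) z"
  proof fix z
    have "(\<lambda>n. \<Prod>j<m. z - \<sigma> (r n) j) \<longlonglongrightarrow> (\<Prod>j<m. z - l j)"
      using rl(2) by (intro tendsto_prod tendsto_diff tendsto_const) auto
    moreover have "poly (P (r n)) z = (\<Prod>j<m. z - \<sigma> (r n) j)" for n
      using \<rho>[of "r n"] by (simp add: poly_prod \<sigma>_def)
    ultimately show "(\<lambda>n. poly (P (r n)) z) \<longlonglongrightarrow> poly (\<Prod>j<m. [:-l j, 1:]) z" by (simp add: poly_prod)
  qed
  show ?thesis
    by (rule exI[of _ r], rule exI[of _ "(\<Prod>j<m. [:-l j, 1:])"]) (intro conjI rl(1) mem lim)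
qed
lemma limsup_meas:
  fixes A :: "nat \<Rightarrow> real set"
  assumes As: "\<And>n. A n \<in> sets lebesgue" and Asub: "\<And>n. A n \<subseteq> {0..<2*pi}"
    and Am: "\<And>n. measure lebesgue (A n) \<ge> a"
    and B: "B \<in> lmeasurable" and AB: "\<And>t. (\<forall>N. \<exists>n\<ge>N. t \<in> A n) \<Longrightarrow> t \<in> B"
  shows "measure lebesgue B \<ge> a"
proof -
  define C where "C N = (\<Union>n. A (N + n))" for N
  have Cs: "C N \<in> sets lebesgue" for N unfolding C_def using As by auto
  have Csub: "C N \<subseteq> {0..<2*pi}" for N unfolding C_def using Asub by auto
  have Cf: "C N \<in> lmeasurable" for N by (rule fmeasurableI2[OF Ico_fmeas Csub Cs])
  have dec: "decseq C"
    unfolding decseq_def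
  proof (intro allI impI subsetI)
    fix N N' x assume "N \<le> N'" "x \<in> C N'"
    then obtain n where "x \<in> A (N' + n)" unfolding C_def by auto
    then have "x \<in> A (N + (N' - N + n))" using \<open>N \<le> N'\<close> by simp
    then show "x \<in> C N" unfolding C_def by blast
  qed
  have lim: "(\<lambda>N. measure lebesgue (C N)) \<longlonglongrightarrow> measure lebesgue (\<Inter>N. C N)"
    by (rule Lim_measure_decseq) (use Cs dec fmeasurableD2[OF Cf] in auto)
  have ge: "a \<le> measure lebesgue (C N)" for N
  proof -
    have "A N \<subseteq> C N" unfolding C_def by (metis UNIV_I UN_upper add_0_right)
    then have "measure lebesgue (A N) \<le> measure lebesgue (C N)"
      by (intro measure_mono_fmeasurable As Cf)
    then show ?thesis using Am[of N] by linarith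
  qed
  have a1: "a \<le> measure lebesgue (\<Inter>N. C N)"
    using lim ge by (intro LIMSEQ_le_const) auto
  have sub: "(\<Inter>N. C N) \<subseteq> B"
  proof
    fix t assume "t \<in> (\<Inter>N. C N)"
    then have "\<forall>N. \<exists>n\<ge>N. t \<in> A n" unfolding C_def by (auto intro: le_add1)
    then show "t \<in> B" by (rule AB)
  qed
  have "(\<Inter>N. C N) \<in> sets lebesgue" using Cs by auto
  then have "measure lebesgue (\<Inter>N. C N) \<le> measure lebesgue B"
    using sub B by (intro measure_mono_fmeasurable)
  then show ?thesis using a1 by linarith
qed

lemma bdd_Q: "compact Q \<Longrightarrow> bdd_above ((\<lambda>z. cmod (poly P z)) ` Q)"
  by (intro bounded_imp_bdd_above compact_imp_bounded compact_continuous_image continuous_intros)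

lemma sup_ge: "compact Q \<Longrightarrow> z \<in> Q \<Longrightarrow> cmod (poly P z) \<le> (SUP z\<in>Q. cmod (poly P z))"
  by (rule cSUP_upper[OF _ bdd_Q])

lemma C_ne: "m \<ge> 1 \<Longrightarrow> monic_circle_polys m \<noteq> {}"
  using P2_mem by blast

lemma Eset_nonneg:
  assumes "compact Q" "Q \<noteq> {}" "m \<ge> 1"
  shows "0 \<le> E_set m Q"
  unfolding E_set_def
proof (rule cINF_greatest)
  show "monic_circle_polys m \<noteq> {}" using C_ne assms(3) .
  fix P
  obtain z where "z \<in> Q" using assms(2) by blast
  then show "0 \<le> (SUP z\<in>Q. cmod (poly P z))"
    using sup_ge[OF assms(1), of z P] norm_ge_zero order_trans by blast
qed

lemma Eset_le:
  assumes "P \<in> monic_circle_polys m" "compact Q" "Q \<noteq> {}"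
  shows "E_set m Q \<le> (SUP z\<in>Q. cmod (poly P z))"
  unfolding E_set_def
proof (rule cINF_lower[OF _ assms(1)])
  obtain z where z: "z \<in> Q" using assms(3) by blast
  show "bdd_below ((\<lambda>P. SUP z\<in>Q. cmod (poly P z)) ` monic_circle_polys m)"
    by (rule bdd_belowI[of _ 0]) (use sup_ge[OF assms(2) z] norm_ge_zero order_trans in blast)
qed

definition Qs :: "real \<Rightarrow> complex set set" where
  "Qs a = {Q. Q \<subseteq> sphere 0 1 \<and> compact Q \<and> arc_length Q = a}"

lemma Qs_ne_elem: "Q \<in> Qs a \<Longrightarrow> a > 0 \<Longrightarrow> Q \<noteq> {}"
  by (auto simp: Qs_def arc_length_def)

lemma Elen_le:
  assumes "Q \<in> Qs a" "a > 0" "m \<ge> 1"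
  shows "E_len m a \<le> E_set m Q"
  unfolding E_len_def
proof (rule cINF_lower)
  show "Q \<in> {Q. Q \<subseteq> sphere 0 1 \<and> compact Q \<and> arc_length Q = a}" using assms(1) by (simp add: Qs_def)
  show "bdd_below (E_set m ` {Q. Q \<subseteq> sphere 0 1 \<and> compact Q \<and> arc_length Q = a})"
    by (rule bdd_belowI[of _ 0]) (use Eset_nonneg Qs_ne_elem assms(2,3) in \<open>auto simp: Qs_def\<close>)
qed

lemma cis_img_Qs:
  assumes "K \<subseteq> {0..<2*pi}" "compact K"
  shows "cis ` K \<in> Qs (measure lebesgue K)"
proof -
  have e: "arc_length (cis ` K) = measure lebesgue K"
    unfolding arc_length_def using arc_img[OF assms(1)] by simp
  show ?thesis unfolding Qs_def using e assms by (auto intro!: compact_continuous_image continuous_intros)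
qed

lemma Qs_ne:
  assumes "0 \<le> a" "a < 2*pi"
  shows "Qs a \<noteq> {}"
proof -
  have "cis ` {0..a} \<in> Qs (measure lebesgue {0..a})" using assms by (intro cis_img_Qs) auto
  then show ?thesis using assms by auto
qed

lemma Elen_nonneg:
  assumes "0 < a" "a < 2*pi" "m \<ge> 1"
  shows "0 \<le> E_len m a"
  unfolding E_len_def
proof (rule cINF_greatest)
  show "{Q. Q \<subseteq> sphere 0 1 \<and> compact Q \<and> arc_length Q = a} \<noteq> {}"
    using Qs_ne[of a] assms by (simp add: Qs_def)
  fix Q assume "Q \<in> {Q. Q \<subseteq> sphere 0 1 \<and> compact Q \<and> arc_length Q = a}"
  then show "0 \<le> E_set m Q" using Eset_nonneg Qs_ne_elem assms by (auto simp: Qs_def)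
qed
lemma small_n: "(0::real) < x \<Longrightarrow> \<exists>n. 1 / real (Suc n) < x"
  using reals_Archimedean[of x] by (simp add: inverse_eq_divide)

lemma keyL:
  assumes m: "m \<ge> 1" and a: "0 < a" "a < 2*pi" and P: "P \<in> monic_circle_polys m"
    and meas: "measure lebesgue {t\<in>{0..<2*pi}. cmod (poly P (cis t)) < c} > a"
  shows "E_len m a < c"
proof -
  define d where "d n = 1/real (Suc n)" for n
  have dpos: "0 < d n" for n by (simp add: d_def)
  have dmono: "n \<le> n' \<Longrightarrow> d n' \<le> d n" for n n' unfolding d_def by (intro divide_left_mono) auto
  have dsmall: "0 < x \<Longrightarrow> \<exists>n. d n < x" for x using small_n unfolding d_def by blast
  define T where "T n = {t \<in> {0..2*pi - d n}. cmod (poly P (cis t)) \<le> c - d n}" for n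
  have Tc: "compact (T n)" for n
  proof -
    have "T n = {0..2*pi - d n} \<inter> {t. cmod (poly P (cis t)) \<le> c - d n}"
      unfolding T_def by auto
    also have "compact \<dots>"
      by (intro compact_Int_closed compact_Icc closed_Collect_le cont_pc continuous_on_const)
    finally show ?thesis .
  qed
  have Tsub: "T n \<subseteq> {0..<2*pi}" for n
  proof -
    have h: "0 < d n" by (rule dpos)
    show ?thesis unfolding T_def
    proof (intro subsetI)
      fix x assume "x \<in> {t \<in> {0..2*pi - d n}. cmod (poly P (cis t)) \<le> c - d n}"
      then have "0 \<le> x" "x \<le> 2*pi - d n" by auto
      moreover from this(2) h have "x < 2*pi" by linarith
      ultimately show "x \<in> {0..<2*pi}" by simp
    qed
  qed
  have inc: "incseq T"
    unfolding incseq_def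
  proof (intro allI impI subsetI)
    fix n n' t assume nn: "n \<le> n'" and t: "t \<in> T n"
    have "d n' \<le> d n" using nn by (rule dmono)
    then show "t \<in> T n'" using t unfolding T_def by auto
  qed
  have U: "(\<Union>n. T n) = {t\<in>{0..<2*pi}. cmod (poly P (cis t)) < c}"
  proof
    show "(\<Union>n. T n) \<subseteq> {t\<in>{0..<2*pi}. cmod (poly P (cis t)) < c}"
    proof
      fix t assume "t \<in> (\<Union>n. T n)"
      then obtain n where "t \<in> T n" by blast
      moreover have "0 < d n" by (rule dpos)
      ultimately show "t \<in> {t\<in>{0..<2*pi}. cmod (poly P (cis t)) < c}" using Tsub[of n] unfolding T_def by auto
    qed
    show "{t\<in>{0..<2*pi}. cmod (poly P (cis t)) < c} \<subseteq> (\<Union>n. T n)"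
    proof
      fix t assume t: "t \<in> {t\<in>{0..<2*pi}. cmod (poly P (cis t)) < c}"
      then have "0 < min (2*pi - t) (c - cmod (poly P (cis t)))" by auto
      then obtain n where "d n < min (2*pi - t) (c - cmod (poly P (cis t)))" using dsmall by blast
      then have "t \<in> T n" using t unfolding T_def by auto
      then show "t \<in> (\<Union>n. T n)" by blast
    qed
  qed
  have lim: "(\<lambda>n. measure lebesgue (T n)) \<longlonglongrightarrow> measure lebesgue (\<Union>n. T n)"
    by (rule Lim_measure_incseq) (use inc lmeasurable_compact[OF Tc] fmeasurableD2[OF lev_lt] U in auto)
  then have "\<forall>\<^sub>F n in sequentially. a < measure lebesgue (T n)"
    using meas U by (intro order_tendstoD(1)) auto
  then obtain n where n: "a < measure lebesgue (T n)" by (meson eventually_sequentially order_refl)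
  obtain K where K: "compact K" "K \<subseteq> T n" "measure lebesgue K = a"
    using exact_sub[OF Tc[of n] Tsub[of n], of a] n a by auto
  have KI: "K \<subseteq> {0..<2*pi}" using K(2) Tsub by blast
  have Q: "cis ` K \<in> Qs a" using cis_img_Qs[OF KI K(1)] K(3) by simp
  then have Qne: "cis ` K \<noteq> {}" using Qs_ne_elem a by blast
  have Qc: "compact (cis ` K)" using Q by (simp add: Qs_def)
  have "E_len m a \<le> E_set m (cis ` K)" using Elen_le[OF Q a(1) m] .
  also have "\<dots> \<le> (SUP z\<in>cis ` K. cmod (poly P z))" by (rule Eset_le[OF P Qc Qne])
  also have "\<dots> \<le> c - d n"
  proof (rule cSUP_least[OF Qne])
    fix z assume "z \<in> cis ` K"
    then obtain t where "t \<in> K" "z = cis t" by blast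
    then show "cmod (poly P z) \<le> c - d n" using K(2) unfolding T_def by auto
  qed
  also have "\<dots> < c" using dpos[of n] by simp
  finally show ?thesis .
qed

lemma Elen_eq: "E_len m a = (INF Q\<in>Qs a. E_set m Q)"
  by (simp add: E_len_def Qs_def)

lemma approx:
  assumes m: "m \<ge> 1" and a: "0 < a" "a < 2*pi" and e: "0 < e"
  shows "\<exists>P\<in>monic_circle_polys m. measure lebesgue {t\<in>{0..<2*pi}. cmod (poly P (cis t)) \<le> E_len m a + e} \<ge> a"
proof -
  have bdd1: "bdd_below (E_set m ` Qs a)"
  proof (rule bdd_belowI[of _ 0])
    fix x assume "x \<in> E_set m ` Qs a"
    then obtain Q where "Q \<in> Qs a" "x = E_set m Q" by blast
    then show "0 \<le> x" using Eset_nonneg[of Q m] Qs_ne_elem[of Q a] a m by (simp add: Qs_def)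
  qed
  have QSne: "Qs a \<noteq> {}" using Qs_ne[of a] a by simp
  have "(INF Q\<in>Qs a. E_set m Q) < E_len m a + e" using e by (simp add: Elen_eq)
  then obtain Q where Q: "Q \<in> Qs a" "E_set m Q < E_len m a + e"
    using cINF_less_iff[OF QSne bdd1] by blast
  have Qne: "Q \<noteq> {}" using Qs_ne_elem Q(1) a by blast
  have Qc: "compact Q" "Q \<subseteq> sphere 0 1" "arc_length Q = a" using Q(1) by (auto simp: Qs_def)
  obtain z0 where z0: "z0 \<in> Q" using Qne by blast
  have bdd2: "bdd_below ((\<lambda>P. SUP z\<in>Q. cmod (poly P z)) ` monic_circle_polys m)"
  proof (rule bdd_belowI[of _ 0])
    fix x assume "x \<in> (\<lambda>P. SUP z\<in>Q. cmod (poly P z)) ` monic_circle_polys m"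
    then obtain P where "x = (SUP z\<in>Q. cmod (poly P z))" by blast
    then show "0 \<le> x" using sup_ge[OF Qc(1) z0, of P] norm_ge_zero[of "poly P z0"] by linarith
  qed
  have "(INF P\<in>monic_circle_polys m. SUP z\<in>Q. cmod (poly P z)) < E_len m a + e"
    using Q(2) by (simp add: E_set_def)
  then obtain P where P: "P \<in> monic_circle_polys m" "(SUP z\<in>Q. cmod (poly P z)) < E_len m a + e"
    using cINF_less_iff[OF C_ne[OF m] bdd2] by blast
  have sub: "{t\<in>{0..<2*pi}. cis t \<in> Q} \<subseteq> {t\<in>{0..<2*pi}. cmod (poly P (cis t)) \<le> E_len m a + e}"
  proof (intro subsetI)
    fix t assume "t \<in> {t\<in>{0..<2*pi}. cis t \<in> Q}"
    then have "t \<in> {0..<2*pi}" "cis t \<in> Q" by auto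
    moreover have "cmod (poly P (cis t)) \<le> (SUP z\<in>Q. cmod (poly P z))" by (rule sup_ge[OF Qc(1) \<open>cis t \<in> Q\<close>])
    ultimately show "t \<in> {t\<in>{0..<2*pi}. cmod (poly P (cis t)) \<le> E_len m a + e}" using P(2) by simp
  qed
  have "a = measure lebesgue {t\<in>{0..<2*pi}. cis t \<in> Q}" using Qc(3) by (simp add: arc_length_def)
  also have "\<dots> \<le> measure lebesgue {t\<in>{0..<2*pi}. cmod (poly P (cis t)) \<le> E_len m a + e}"
    by (rule measure_mono_fmeasurable[OF sub fmeasurableD[OF arc_pre_lmeas[OF compact_imp_closed[OF Qc(1)]]] lev_le])
  finally show ?thesis using P(1) by blast
qed
lemma compl_meas:
  "measure lebesgue {t\<in>{0..<2*pi}. cmod (poly P (cis t)) \<ge> c} = 2*pi - measure lebesgue {t\<in>{0..<2*pi}. cmod (poly P (cis t)) < c}"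
proof -
  have "{t\<in>{0..<2*pi}. cmod (poly P (cis t)) \<ge> c} = {0..<2*pi} - {t\<in>{0..<2*pi}. cmod (poly P (cis t)) < c}" by auto
  also have "measure lebesgue \<dots> = measure lebesgue {0..<2*pi::real} - measure lebesgue {t\<in>{0..<2*pi}. cmod (poly P (cis t)) < c}"
    by (rule measure_Diff) (use fmeasurableD2[OF Ico_fmeas] fmeasurableD[OF lev_lt] in auto)
  finally show ?thesis by simp
qed

lemma le_lt_meas:
  assumes "P \<in> monic_circle_polys m" "m \<ge> 1"
  shows "measure lebesgue {t\<in>{0..<2*pi}. cmod (poly P (cis t)) \<le> c} \<le> measure lebesgue {t\<in>{0..<2*pi}. cmod (poly P (cis t)) < c}"
proof -
  have "measure lebesgue {t\<in>{0..<2*pi}. cmod (poly P (cis t)) \<le> c}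
      \<le> measure lebesgue ({t\<in>{0..<2*pi}. cmod (poly P (cis t)) < c} \<union> {t\<in>{0..<2*pi}. cmod (poly P (cis t)) = c})"
    by (rule measure_mono_fmeasurable[OF _ fmeasurableD[OF lev_le] fmeasurable.Un[OF lev_lt lev_eq]]) auto
  also have "\<dots> \<le> measure lebesgue {t\<in>{0..<2*pi}. cmod (poly P (cis t)) < c} + measure lebesgue {t\<in>{0..<2*pi}. cmod (poly P (cis t)) = c}"
    by (rule measure_Un_le[OF fmeasurableD[OF lev_lt] fmeasurableD[OF lev_eq]])
  finally show ?thesis using lev_null[OF assms] by simp
qed

lemma limit_exists:
  assumes m: "m \<ge> 1" and a: "0 < a" "a < 2*pi"
  shows "\<exists>P0\<in>monic_circle_polys m. measure lebesgue {t\<in>{0..<2*pi}. cmod (poly P0 (cis t)) \<le> E_len m a} \<ge> a"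
proof -
  define h where "h = E_len m a"
  have "\<forall>n. \<exists>P\<in>monic_circle_polys m. measure lebesgue {t\<in>{0..<2*pi}. cmod (poly P (cis t)) \<le> h + 1/real (Suc n)} \<ge> a"
    unfolding h_def using approx[OF m a] by simp
  then obtain P :: "nat \<Rightarrow> complex poly" where P: "\<And>n. P n \<in> monic_circle_polys m"
     "\<And>n. measure lebesgue {t\<in>{0..<2*pi}. cmod (poly (P n) (cis t)) \<le> h + 1/real (Suc n)} \<ge> a"
    by metis
  obtain r P0 where r: "strict_mono r" "P0 \<in> monic_circle_polys m" "\<And>z. (\<lambda>n. poly (P (r n)) z) \<longlonglongrightarrow> poly P0 z"
    using cpt[of P m] P(1) by blast
  have "measure lebesgue {t\<in>{0..<2*pi}. cmod (poly P0 (cis t)) \<le> h} \<ge> a"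
  proof (rule limsup_meas[of "\<lambda>n. {t\<in>{0..<2*pi}. cmod (poly (P (r n)) (cis t)) \<le> h + 1/real (Suc (r n))}"])
    show "{t\<in>{0..<2*pi}. cmod (poly (P (r n)) (cis t)) \<le> h + 1/real (Suc (r n))} \<in> sets lebesgue" for n
      by (rule fmeasurableD[OF lev_le])
    show "{t\<in>{0..<2*pi}. cmod (poly (P (r n)) (cis t)) \<le> h + 1/real (Suc (r n))} \<subseteq> {0..<2*pi}" for n by auto
    show "a \<le> measure lebesgue {t\<in>{0..<2*pi}. cmod (poly (P (r n)) (cis t)) \<le> h + 1/real (Suc (r n))}" for n
      by (rule P(2))
    show "{t\<in>{0..<2*pi}. cmod (poly P0 (cis t)) \<le> h} \<in> lmeasurable" by (rule lev_le)
    fix t assume inf: "\<forall>N. \<exists>n\<ge>N. t \<in> {t\<in>{0..<2*pi}. cmod (poly (P (r n)) (cis t)) \<le> h + 1/real (Suc (r n))}"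
    then have tI: "t \<in> {0..<2*pi}" by blast
    have "cmod (poly P0 (cis t)) \<le> h"
    proof (rule ccontr)
      assume "\<not> cmod (poly P0 (cis t)) \<le> h"
      then have gt: "h < cmod (poly P0 (cis t))" by simp
      define dd where "dd = cmod (poly P0 (cis t)) - h"
      have dd: "0 < dd" using gt by (simp add: dd_def)
      have "(\<lambda>n. cmod (poly (P (r n)) (cis t))) \<longlonglongrightarrow> cmod (poly P0 (cis t))"
        by (intro tendsto_norm r(3))
      moreover have "h + dd/2 < cmod (poly P0 (cis t))"
      proof -
        have "h + dd/2 < h + dd" using dd by simp
        also have "h + dd = cmod (poly P0 (cis t))" by (simp add: dd_def)
        finally show ?thesis .
      qed
      ultimately have "\<forall>\<^sub>F n in sequentially. h + dd/2 < cmod (poly (P (r n)) (cis t))"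
        by (rule order_tendstoD(1))
      then obtain N1 where N1: "\<And>n. n \<ge> N1 \<Longrightarrow> h + dd/2 < cmod (poly (P (r n)) (cis t))"
        unfolding eventually_sequentially by blast
      obtain N2 where N2: "1 / real (Suc N2) < dd/2" using small_n[of "dd/2"] dd by auto
      obtain n where n: "n \<ge> max N1 N2" "cmod (poly (P (r n)) (cis t)) \<le> h + 1/real (Suc (r n))"
        using inf by blast
      have "n \<le> r n" using r(1) by (rule seq_suble)
      then have "1/real (Suc (r n)) \<le> 1/real (Suc N2)" using n(1) by (intro divide_left_mono) auto
      then show False using N1[of n] N2 n by linarith
    qed
    then show "t \<in> {t\<in>{0..<2*pi}. cmod (poly P0 (cis t)) \<le> h}" using tI by blast
  qed
  then show ?thesis using r(2) unfolding h_def by blast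
qed

theorem theorem3:
  fixes m :: nat and \<alpha> h :: real
  assumes "m \<ge> 1" and "0 < \<alpha>" and "\<alpha> < pi"
    and "h = E_len m (2 * \<alpha>)"
  shows "0 < h \<and> h < 2 \<and> delta m h = 2 * pi - 2 * \<alpha>"
proof -
  have m: "m \<ge> 1" using assms(1) .
  have a: "0 < 2*\<alpha>" "2*\<alpha> < 2*pi" using assms(2,3) by auto
  have h0: "0 \<le> h" using Elen_nonneg[OF a m] assms(4) by simp
  obtain P0 where P0: "P0 \<in> monic_circle_polys m" "measure lebesgue {t\<in>{0..<2*pi}. cmod (poly P0 (cis t)) \<le> h} \<ge> 2*\<alpha>"
    using limit_exists[OF m a] assms(4) by blast
  have hpos: "0 < h"
  proof (rule ccontr)
    assume "\<not> 0 < h"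
    then have "h = 0" using h0 by simp
    then have e: "{t\<in>{0..<2*pi}. cmod (poly P0 (cis t)) \<le> h} = {t\<in>{0..<2*pi}. cmod (poly P0 (cis t)) = 0}"
      by simp
    have "measure lebesgue {t\<in>{0..<2*pi}. cmod (poly P0 (cis t)) \<le> h} = 0"
      using lev_null[OF P0(1) m, of 0] by (simp only: e)
    then show False using P0(2) a by simp
  qed
  have hlt2: "h < 2"
  proof -
    let ?P = "monom 1 m + 1 :: complex poly"
    have Pm: "?P \<in> monic_circle_polys m" by (rule P2_mem[OF m])
    have le2: "cmod (poly ?P (cis t)) \<le> 2" for t
    proof -
      have "cmod (poly ?P (cis t)) = cmod (cis t ^ m + 1)" by (simp add: poly_monom)
      also have "\<dots> \<le> cmod (cis t ^ m) + cmod (1::complex)" by (rule norm_triangle_ineq)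
      also have "\<dots> = 2" by (simp add: norm_power)
      finally show ?thesis .
    qed
    have e2: "{t\<in>{0..<2*pi}. cmod (poly ?P (cis t)) \<ge> 2} = {t\<in>{0..<2*pi}. cmod (poly ?P (cis t)) = 2}"
      using le2 by (auto simp: order.eq_iff)
    have "measure lebesgue {t\<in>{0..<2*pi}. cmod (poly ?P (cis t)) \<ge> 2} = 0"
      unfolding e2 by (rule lev_null[OF Pm m])
    then have "measure lebesgue {t\<in>{0..<2*pi}. cmod (poly ?P (cis t)) < 2} = 2*pi"
      using compl_meas[where P="?P" and c=2] by linarith
    then have "measure lebesgue {t\<in>{0..<2*pi}. cmod (poly ?P (cis t)) < 2} > 2*\<alpha>" using a by simp
    then show ?thesis using keyL[OF m a Pm] assms(4) by simp
  qed
  have dge: "2*pi - 2*\<alpha> \<le> delta m h"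
    unfolding delta_def
  proof (rule cINF_greatest[OF C_ne[OF m]])
    fix P assume P: "P \<in> monic_circle_polys m"
    have "\<not> measure lebesgue {t\<in>{0..<2*pi}. cmod (poly P (cis t)) < h} > 2*\<alpha>"
      using keyL[OF m a P, of h] assms(4) by auto
    then show "2*pi - 2*\<alpha> \<le> measure lebesgue {t\<in>{0..<2*pi}. cmod (poly P (cis t)) \<ge> h}"
      unfolding compl_meas by simp
  qed
  have dle: "delta m h \<le> 2*pi - 2*\<alpha>"
  proof -
    have "delta m h \<le> measure lebesgue {t\<in>{0..<2*pi}. cmod (poly P0 (cis t)) \<ge> h}"
      unfolding delta_def by (rule cINF_lower[OF _ P0(1)]) (rule bdd_belowI[of _ 0], auto)
    also have "\<dots> \<le> 2*pi - 2*\<alpha>"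
      unfolding compl_meas using le_lt_meas[OF P0(1) m, of h] P0(2) by simp
    finally show ?thesis .
  qed
  show ?thesis using hpos hlt2 dge dle by simp
qed

end
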